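(* Suppose $\lambda_1>0$ and $\beta$ satisfies condition $(E)$. Let $\varphi$ be an entire function such that the composition operator $C_\varphi f=f\circ\varphi$ maps $\mathcal{H}(E,\beta)$ into itself and is bounded on $\mathcal{H}(E,\beta)$. Then $\varphi(z)=z+b$ for some $b\in\mathbb{C}$ with $\operatorname{Re}(b)\ge0$.
   Context: Fix a sequence $\Lambda=(\lambda_n)_{n\ge1}$ of real numbers with $0\le\lambda_1<\lambda_2<\cdots$ and $\lambda_n\to+\infty$, such that $\limsup_{n\to\infty}\frac{\log n}{\lambda_n}<+\infty$. For a sequence $\beta=(\beta_n)$ of positive reals, condition $(E)$ is: $\liminf_{n\to\infty}\frac{\log\beta_n}{\lambda_n}=+\infty$. Under $(E)$, $\mathcal{H}(E,\beta)$ denotes the Hilbert space of entire functions $f(z)=\sum_{n=1}^\infty a_ne^{-\lambda_nz}$ ($a_n\in\mathbb{C}$; the representation is unique) with norm $\|f\|=\big(\sum_{n=1}^\infty|a_n|^2\beta_n^2\big)^{1/2}<\infty$. *)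

theory Defs
  imports "HOL-Analysis.Analysis"
begin

text \<open>Indices are shifted: the paper's lambda_1, lambda_2, ... are Lam 0, Lam 1, ...\<close>

definition dirichlet_sum :: "(nat \<Rightarrow> real) \<Rightarrow> (nat \<Rightarrow> complex) \<Rightarrow> complex \<Rightarrow> complex" where
  "dirichlet_sum Lam a z = (\<Sum>n. a n * exp (- (of_real (Lam n)) * z))"

definition coeff_ok :: "(nat \<Rightarrow> real) \<Rightarrow> (nat \<Rightarrow> complex) \<Rightarrow> bool" where
  "coeff_ok beta a \<longleftrightarrow> summable (\<lambda>n. (cmod (a n))\<^sup>2 * (beta n)\<^sup>2)"

definition HE :: "(nat \<Rightarrow> real) \<Rightarrow> (nat \<Rightarrow> real) \<Rightarrow> (complex \<Rightarrow> complex) set" where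
  "HE Lam beta = {f. \<exists>a. coeff_ok beta a \<and> (\<forall>z. f z = dirichlet_sum Lam a z)}"

definition HE_coeffs :: "(nat \<Rightarrow> real) \<Rightarrow> (nat \<Rightarrow> real) \<Rightarrow> (complex \<Rightarrow> complex) \<Rightarrow> nat \<Rightarrow> complex" where
  "HE_coeffs Lam beta f = (THE a. coeff_ok beta a \<and> (\<forall>z. f z = dirichlet_sum Lam a z))"

definition HE_norm :: "(nat \<Rightarrow> real) \<Rightarrow> (nat \<Rightarrow> real) \<Rightarrow> (complex \<Rightarrow> complex) \<Rightarrow> real" where
  "HE_norm Lam beta f = sqrt (\<Sum>n. (cmod (HE_coeffs Lam beta f n))\<^sup>2 * (beta n)\<^sup>2)"

definition bounded_comp_op :: "(nat \<Rightarrow> real) \<Rightarrow> (nat \<Rightarrow> real) \<Rightarrow> (complex \<Rightarrow> complex) \<Rightarrow> bool" where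
  "bounded_comp_op Lam beta phi \<longleftrightarrow>
     (\<forall>f \<in> HE Lam beta. f \<circ> phi \<in> HE Lam beta) \<and>
     (\<exists>C. \<forall>f \<in> HE Lam beta. HE_norm Lam beta (f \<circ> phi) \<le> C * HE_norm Lam beta f)"

end

theory Submission
  imports Defs "HOL-Complex_Analysis.Complex_Analysis"
begin


locale HEsetup =
  fixes Lam beta :: "nat \<Rightarrow> real"
  assumes pos: "\<And>n. Lam n > 0"
    and mono: "strict_mono Lam"
    and growth: "limsup (\<lambda>n. ereal (ln (real (Suc n)) / Lam n)) < \<infinity>"
    and bpos: "\<And>n. beta n > 0"
    and condE: "liminf (\<lambda>n. ereal (ln (beta n) / Lam n)) = \<infinity>"
begin

lemma kernel_summable: "summable (\<lambda>n. exp (-2 * Lam n * x) / (beta n)^2)"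
proof -
  obtain A where A: "\<And>n. ln (real (Suc n)) / Lam n \<le> A"
    using limsup_finite_then_bounded[OF growth] by blast
  have "ereal (A - x) < liminf (\<lambda>n. ereal (ln (beta n) / Lam n))" using condE by simp
  then have ev: "eventually (\<lambda>n. ereal (A - x) < ereal (ln (beta n) / Lam n)) sequentially"
    by (rule less_LiminfD)
  have key: "exp (-2 * L * x) / b^2 \<le> inverse (s ^ 2)"
    if "L > 0" "b > 0" "s > 0" "ln s \<le> A * L" "(A - x) * L < ln b" for L b s :: real
  proof -
    have h4: "ln s - L * x \<le> ln b" using that by (simp add: algebra_simps)
    have e1: "b^2 = exp (2 * ln b)"
    proof -
      have "exp (2 * ln b) = exp (ln b) * exp (ln b)" by (simp only: mult_2 exp_add)
      then show ?thesis using that by (simp add: power2_eq_square)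
    qed
    have e2: "s^2 = exp (2 * ln s)"
    proof -
      have "exp (2 * ln s) = exp (ln s) * exp (ln s)" by (simp only: mult_2 exp_add)
      then show ?thesis using that by (simp add: power2_eq_square)
    qed
    have "exp (-2 * L * x) / b^2 = exp (-2 * L * x - 2 * ln b)"
      by (simp only: e1 exp_diff)
    also have "\<dots> \<le> exp (- (2 * ln s))" using h4 by simp
    also have "\<dots> = inverse (s ^ 2)" by (simp only: e2 exp_minus)
    finally show ?thesis .
  qed
  have "eventually (\<lambda>n. norm (exp (-2 * Lam n * x) / (beta n)^2) \<le> inverse (real (Suc n) ^ 2)) sequentially"
    using ev
  proof (rule eventually_mono)
    fix n assume "ereal (A - x) < ereal (ln (beta n) / Lam n)"
    then have h1: "A - x < ln (beta n) / Lam n" by simp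
    have lp: "Lam n > 0" by (rule pos)
    have h2: "(A - x) * Lam n < ln (beta n)" using h1 lp by (simp add: field_simps)
    have h3: "ln (real (Suc n)) \<le> A * Lam n" using A[of n] lp by (simp add: field_simps)
    have "exp (-2 * Lam n * x) / (beta n)^2 \<le> inverse (real (Suc n) ^ 2)"
      by (rule key[OF lp bpos[of n] _ h3 h2]) simp
    then show "norm (exp (-2 * Lam n * x) / (beta n)^2) \<le> inverse (real (Suc n) ^ 2)" by simp
  qed
  moreover have "summable (\<lambda>n. inverse (real (Suc n) ^ 2))"
    using inverse_power_summable[of 2, where 'a=real] summable_Suc_iff[of "\<lambda>n. inverse (real n ^ 2)"]
    by simp
  ultimately show ?thesis by (rule summable_comparison_test_ev)
qed

lemma suminf_CS:
  fixes u v :: "nat \<Rightarrow> real"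
  assumes su: "summable (\<lambda>n. (u n)^2)" and sv: "summable (\<lambda>n. (v n)^2)"
    and u0: "\<And>n. u n \<ge> 0" and v0: "\<And>n. v n \<ge> 0"
  shows "summable (\<lambda>n. u n * v n)" "(\<Sum>n. u n * v n) \<le> sqrt (\<Sum>n. (u n)^2) * sqrt (\<Sum>n. (v n)^2)"
proof -
  have b: "norm (u n * v n) \<le> ((u n)^2 + (v n)^2) / 2" for n
    using u0[of n] v0[of n] sum_squares_bound[of "u n" "v n"]
    by (simp add: abs_mult power2_eq_square)
  show s: "summable (\<lambda>n. u n * v n)"
    by (rule summable_comparison_test'[OF summable_divide[OF summable_add[OF su sv]] b])
  show "(\<Sum>n. u n * v n) \<le> sqrt (\<Sum>n. (u n)^2) * sqrt (\<Sum>n. (v n)^2)"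
  proof (rule suminf_le_const[OF s])
    fix N
    have "(\<Sum>n<N. u n * v n) = (\<Sum>n<N. \<bar>u n\<bar> * \<bar>v n\<bar>)" using u0 v0 by simp
    also have "\<dots> \<le> L2_set u {..<N} * L2_set v {..<N}" by (rule L2_set_mult_ineq)
    also have "\<dots> \<le> sqrt (\<Sum>n. (u n)^2) * sqrt (\<Sum>n. (v n)^2)"
    proof -
      have 1: "sqrt (\<Sum>n<N. (u n)^2) \<le> sqrt (\<Sum>n. (u n)^2)"
        by (rule real_sqrt_le_mono, rule sum_le_suminf[OF su]) auto
      have 2: "sqrt (\<Sum>n<N. (v n)^2) \<le> sqrt (\<Sum>n. (v n)^2)"
        by (rule real_sqrt_le_mono, rule sum_le_suminf[OF sv]) auto
      have 3: "0 \<le> sqrt (\<Sum>n<N. (v n)^2)" by (simp add: sum_nonneg)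
      have 4: "0 \<le> sqrt (\<Sum>n. (u n)^2)" using su by (simp add: suminf_nonneg)
      show ?thesis unfolding L2_set_def using mult_mono[OF 1 2 4 3] .
    qed
    finally show "(\<Sum>n<N. u n * v n) \<le> sqrt (\<Sum>n. (u n)^2) * sqrt (\<Sum>n. (v n)^2)" .
  qed
qed

lemma abs_summable:
  assumes ok: "coeff_ok beta a"
  shows "summable (\<lambda>n. cmod (a n) * exp (- Lam n * x))"
    "(\<Sum>n. cmod (a n) * exp (- Lam n * x)) \<le> sqrt (\<Sum>n. (cmod (a n))^2 * (beta n)^2) * sqrt (\<Sum>n. exp (-2 * Lam n * x) / (beta n)^2)"
proof -
  let ?u = "\<lambda>n. cmod (a n) * beta n" and ?v = "\<lambda>n. exp (- Lam n * x) / beta n"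
  have e: "?u n * ?v n = cmod (a n) * exp (- Lam n * x)" for n using bpos[of n] by simp
  have u2: "(?u n)^2 = (cmod (a n))^2 * (beta n)^2" for n by (simp add: power_mult_distrib)
  have v2: "(?v n)^2 = exp (-2 * Lam n * x) / (beta n)^2" for n
    by (simp add: power_divide power2_eq_square flip: exp_add)
  have su: "summable (\<lambda>n. (?u n)^2)" using ok unfolding coeff_ok_def u2 .
  have sv: "summable (\<lambda>n. (?v n)^2)" unfolding v2 by (rule kernel_summable)
  have u0: "?u n \<ge> 0" for n using bpos[of n] by simp
  have v0: "?v n \<ge> 0" for n using bpos[of n] by simp
  show "summable (\<lambda>n. cmod (a n) * exp (- Lam n * x))"
    using suminf_CS(1)[OF su sv u0 v0] unfolding e .
  show "(\<Sum>n. cmod (a n) * exp (- Lam n * x)) \<le> sqrt (\<Sum>n. (cmod (a n))^2 * (beta n)^2) * sqrt (\<Sum>n. exp (-2 * Lam n * x) / (beta n)^2)"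
    using suminf_CS(2)[OF su sv u0 v0] unfolding e u2 v2 .
qed

lemma norm_term: "norm (a n * exp (- (of_real (Lam n)) * z)) = cmod (a n) * exp (- Lam n * Re z)"
  by (simp add: norm_mult norm_exp_eq_Re)

lemma ds_summable:
  assumes ok: "coeff_ok beta a"
  shows "summable (\<lambda>n. norm (a n * exp (- (of_real (Lam n)) * z)))"
    "summable (\<lambda>n. a n * exp (- (of_real (Lam n)) * z))"
proof -
  show 1: "summable (\<lambda>n. norm (a n * exp (- (of_real (Lam n)) * z)))"
    unfolding norm_term by (rule abs_summable(1)[OF ok])
  show "summable (\<lambda>n. a n * exp (- (of_real (Lam n)) * z))"
    by (rule summable_norm_cancel[OF 1])
qed

lemma ds_bound:
  assumes ok: "coeff_ok beta a"
  shows "cmod (dirichlet_sum Lam a z) \<le> sqrt (\<Sum>n. (cmod (a n))^2 * (beta n)^2) * sqrt (\<Sum>n. exp (-2 * Lam n * Re z) / (beta n)^2)"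
proof -
  have "cmod (dirichlet_sum Lam a z) \<le> (\<Sum>n. norm (a n * exp (- (of_real (Lam n)) * z)))"
    unfolding dirichlet_sum_def by (rule summable_norm[OF ds_summable(1)[OF ok]])
  also have "\<dots> = (\<Sum>n. cmod (a n) * exp (- Lam n * Re z))" unfolding norm_term ..
  also have "\<dots> \<le> sqrt (\<Sum>n. (cmod (a n))^2 * (beta n)^2) * sqrt (\<Sum>n. exp (-2 * Lam n * Re z) / (beta n)^2)" by (rule abs_summable(2)[OF ok])
  finally show ?thesis .
qed

end

context HEsetup begin

lemma ds_zero_unique:
  assumes ok: "coeff_ok beta d" and z: "\<And>x::real. dirichlet_sum Lam d (of_real x) = 0"
  shows "d k = 0"
proof (rule ccontr)
  assume "d k \<noteq> 0"
  define m where "m = (LEAST n. d n \<noteq> 0)"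
  have dm: "d m \<noteq> 0" unfolding m_def by (rule LeastI[of _ k]) fact
  have lt: "d j = 0" if "j < m" for j using not_less_Least[of j "\<lambda>n. d n \<noteq> 0"] that unfolding m_def by blast
  define S where "S = (\<Sum>n. cmod (d n) * exp (- Lam n * 1))"
  have sS: "summable (\<lambda>n. cmod (d n) * exp (- Lam n * 1))" by (rule abs_summable(1)[OF ok])
  have S0: "S \<ge> 0" unfolding S_def using sS by (intro suminf_nonneg) auto
  define c where "c = cmod (d m)"
  have c0: "c > 0" using dm unfolding c_def by simp
  have mono1: "Lam m < Lam (Suc m)" using mono by (simp add: strict_mono_def)
  have key: "c * exp (- Lam m * x) \<le> S * exp (- Lam (Suc m) * (x - 1))" if x1: "x \<ge> 1" for x :: real
  proof -
    define g where "g n = d n * exp (- (of_real (Lam n)) * complex_of_real x)" for n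
    have sg: "g sums 0" using ds_summable(2)[OF ok, of "of_real x"] z[of x]
      unfolding g_def dirichlet_sum_def by (simp add: summable_sums_iff)
    define h where "h n = g n - (if n = m then g n else 0)" for n
    have sh: "h sums (0 - g m)" unfolding h_def by (intro sums_diff sg sums_single)
    define B where "B n = cmod (d n) * exp (- Lam n * 1) * exp (- Lam (Suc m) * (x - 1))" for n
    have hb: "norm (h n) \<le> B n" for n
    proof (cases "m < n")
      case True
      then have "Lam (Suc m) \<le> Lam n" using mono by (simp add: strict_mono_less_eq Suc_leI)
      then have "Lam (Suc m) * (x - 1) \<le> Lam n * (x - 1)" using x1 by (intro mult_right_mono) auto
      then have "exp (- Lam n * x) \<le> exp (- Lam n * 1) * exp (- Lam (Suc m) * (x - 1))"
        by (simp add: algebra_simps flip: exp_add)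
      then have "cmod (d n) * exp (- Lam n * x) \<le> B n"
        unfolding B_def by (simp add: mult.assoc mult_left_mono)
      moreover have "norm (h n) = cmod (d n) * exp (- Lam n * x)"
        using True unfolding h_def g_def by (simp add: norm_mult norm_exp_eq_Re)
      ultimately show ?thesis by simp
    next
      case False
      then have "h n = 0" unfolding h_def g_def using lt[of n] by (cases "n = m") auto
      then show ?thesis unfolding B_def by simp
    qed
    have sB: "summable B" unfolding B_def by (intro summable_mult2 sS)
    have snh: "summable (\<lambda>n. norm (h n))" by (rule summable_comparison_test'[OF sB]) (use hb in auto)
    have "norm (g m) = norm (suminf h)" using sh by (simp add: sums_iff)
    also have "\<dots> \<le> (\<Sum>n. norm (h n))" by (rule summable_norm[OF snh])
    also have "\<dots> \<le> suminf B" by (rule suminf_le[OF hb snh sB])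
    also have "\<dots> = S * exp (- Lam (Suc m) * (x - 1))" unfolding B_def S_def by (rule suminf_mult2[symmetric, OF sS])
    finally show ?thesis unfolding g_def c_def by (simp add: norm_mult norm_exp_eq_Re)
  qed
  define \<delta> where "\<delta> = Lam (Suc m) - Lam m"
  have d0: "\<delta> > 0" using mono1 unfolding \<delta>_def by simp
  define T where "T = S * exp (Lam (Suc m))"
  have T0: "T \<ge> 0" using S0 unfolding T_def by simp
  define x where "x = max 1 (ln ((T + 1) / c) / \<delta>)"
  have x1: "x \<ge> 1" unfolding x_def by simp
  have "c * exp (- Lam m * x) \<le> S * exp (- Lam (Suc m) * (x - 1))" by (rule key[OF x1])
  then have "c * exp (- Lam m * x) * exp (Lam m * x) \<le> S * exp (- Lam (Suc m) * (x - 1)) * exp (Lam m * x)"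
    by (intro mult_right_mono) auto
  also have "S * exp (- Lam (Suc m) * (x - 1)) * exp (Lam m * x) = T * exp (- (\<delta> * x))"
    unfolding T_def \<delta>_def by (simp add: algebra_simps flip: exp_add)
  finally have ineq: "c \<le> T * exp (- (\<delta> * x))" by (simp add: mult.assoc flip: exp_add)
  have "ln ((T + 1) / c) \<le> \<delta> * x" using d0 unfolding x_def
    by (simp add: field_simps max_def)
  then have "exp (ln ((T + 1) / c)) \<le> exp (\<delta> * x)" by simp
  then have "(T + 1) / c \<le> exp (\<delta> * x)" using T0 c0 by simp
  then have "T + 1 \<le> c * exp (\<delta> * x)" using c0 by (simp add: field_simps)
  moreover have "T * exp (- (\<delta> * x)) * exp (\<delta> * x) = T" by (simp flip: exp_add)
  ultimately have "c * exp (\<delta> * x) \<le> T" using ineq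
    by (metis exp_gt_zero mult_right_mono less_imp_le)
  then show False using \<open>T + 1 \<le> c * exp (\<delta> * x)\<close> by simp
qed

lemma coeff_ok_diff:
  assumes "coeff_ok beta a" "coeff_ok beta b"
  shows "coeff_ok beta (\<lambda>n. a n - b n)"
proof -
  have "norm ((cmod (a n - b n))^2 * (beta n)^2) \<le> 2 * ((cmod (a n))^2 * (beta n)^2) + 2 * ((cmod (b n))^2 * (beta n)^2)" for n
  proof -
    have "cmod (a n - b n) \<le> cmod (a n) + cmod (b n)" by (rule norm_triangle_ineq4)
    then have "(cmod (a n - b n))^2 \<le> (cmod (a n) + cmod (b n))^2" by (intro power_mono) auto
    also have "\<dots> \<le> 2 * (cmod (a n))^2 + 2 * (cmod (b n))^2"
      using sum_squares_bound[of "cmod (a n)" "cmod (b n)"] by (simp add: power2_eq_square algebra_simps)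
    finally have X: "(cmod (a n - b n))^2 \<le> 2 * (cmod (a n))^2 + 2 * (cmod (b n))^2" .
    show ?thesis using mult_right_mono[OF X zero_le_power2[of "beta n"]] by (simp add: algebra_simps)
  qed
  moreover have "summable (\<lambda>n. 2 * ((cmod (a n))^2 * (beta n)^2) + 2 * ((cmod (b n))^2 * (beta n)^2))"
    using assms unfolding coeff_ok_def by (intro summable_add summable_mult)
  ultimately show ?thesis unfolding coeff_ok_def by (rule summable_comparison_test'[rotated])
qed

lemma ds_unique:
  assumes "coeff_ok beta a" "coeff_ok beta b" "\<And>z. dirichlet_sum Lam a z = dirichlet_sum Lam b z"
  shows "a = b"
proof
  fix k
  have "(\<lambda>n. a n - b n) k = 0"
  proof (rule ds_zero_unique[OF coeff_ok_diff[OF assms(1,2)]])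
    fix x :: real
    show "dirichlet_sum Lam (\<lambda>n. a n - b n) (of_real x) = 0"
    proof -
      let ?E = "\<lambda>n. exp (- (of_real (Lam n)) * (of_real x :: complex))"
      have "(\<Sum>n. a n * ?E n - b n * ?E n) = (\<Sum>n. a n * ?E n) - (\<Sum>n. b n * ?E n)"
        by (rule suminf_diff[symmetric, OF ds_summable(2)[OF assms(1)] ds_summable(2)[OF assms(2)]])
      also have "\<dots> = 0" using assms(3)[of "of_real x"] unfolding dirichlet_sum_def by simp
      finally show ?thesis unfolding dirichlet_sum_def by (simp only: left_diff_distrib)
    qed
  qed
  then show "a k = b k" by simp
qed

lemma HE_coeffs_eq:
  assumes "coeff_ok beta a" "\<And>z. f z = dirichlet_sum Lam a z"
  shows "HE_coeffs Lam beta f = a"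
  unfolding HE_coeffs_def
  by (rule the_equality) (use assms ds_unique in auto)

lemma HE_coeffs_rep:
  assumes "f \<in> HE Lam beta"
  shows "coeff_ok beta (HE_coeffs Lam beta f)" "\<And>z. f z = dirichlet_sum Lam (HE_coeffs Lam beta f) z"
proof -
  obtain a where a: "coeff_ok beta a" "\<And>z. f z = dirichlet_sum Lam a z" using assms unfolding HE_def by auto
  have eq: "HE_coeffs Lam beta f = a" by (rule HE_coeffs_eq[OF a])
  show "coeff_ok beta (HE_coeffs Lam beta f)" by (simp only: eq a(1))
  show "\<And>z. f z = dirichlet_sum Lam (HE_coeffs Lam beta f) z" by (simp only: eq a(2))
qed

lemma HE_point_bound:
  assumes "f \<in> HE Lam beta"
  shows "cmod (f z) \<le> HE_norm Lam beta f * sqrt (\<Sum>n. exp (-2 * Lam n * Re z) / (beta n)^2)"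
  unfolding HE_norm_def HE_coeffs_rep(2)[OF assms, of z]
  by (rule ds_bound[OF HE_coeffs_rep(1)[OF assms]])

end

context HEsetup begin

definition K :: "real \<Rightarrow> real" where
  "K x = (\<Sum>n. exp (-2 * Lam n * x) / (beta n)^2)"

lemma K_pos: "K x > 0"
  unfolding K_def by (rule suminf_pos[OF kernel_summable]) (use bpos in \<open>auto intro!: divide_pos_pos simp: less_imp_neq[symmetric]\<close>)

lemma Lam_ge0: "Lam 0 \<le> Lam n"
  using mono by (simp add: strict_mono_less_eq)

lemma K_anti: assumes "y \<le> x" shows "K x \<le> K y"
  unfolding K_def
proof (rule suminf_le[OF _ kernel_summable kernel_summable])
  fix n
  have "-2 * Lam n * x \<le> -2 * Lam n * y" using assms pos[of n] by (simp add: mult_left_mono)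
  then show "exp (-2 * Lam n * x) / (beta n)^2 \<le> exp (-2 * Lam n * y) / (beta n)^2"
    by (intro divide_right_mono) auto
qed

lemma K_shift: assumes "D \<ge> 0" shows "exp (2 * Lam 0 * D) * K x \<le> K (x - D)"
proof -
  have "exp (2 * Lam 0 * D) * K x = (\<Sum>n. exp (2 * Lam 0 * D) * (exp (-2 * Lam n * x) / (beta n)^2))"
    unfolding K_def by (rule suminf_mult[symmetric, OF kernel_summable])
  also have "\<dots> \<le> K (x - D)" unfolding K_def
  proof (rule suminf_le[OF _ summable_mult[OF kernel_summable] kernel_summable])
    fix n
    have "Lam 0 * D \<le> Lam n * D" using Lam_ge0[of n] assms by (intro mult_right_mono)
    then have X: "exp (2 * Lam 0 * D) * exp (-2 * Lam n * x) \<le> exp (-2 * Lam n * (x - D))"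
      by (simp add: algebra_simps flip: exp_add)
    then show "exp (2 * Lam 0 * D) * (exp (-2 * Lam n * x) / (beta n)^2) \<le> exp (-2 * Lam n * (x - D)) / (beta n)^2"
      using divide_right_mono[OF X zero_le_power2[of "beta n"]] by simp
  qed
  finally show ?thesis .
qed

definition ka :: "complex \<Rightarrow> nat \<Rightarrow> complex" where
  "ka u n = exp (- (of_real (Lam n)) * cnj u) / of_real ((beta n)^2)"

lemma ka_sq: "(cmod (ka u n))^2 * (beta n)^2 = exp (-2 * Lam n * Re u) / (beta n)^2"
proof -
  have "cmod (ka u n) = exp (- Lam n * Re u) / (beta n)^2"
    unfolding ka_def using bpos[of n] by (simp add: norm_divide norm_exp_eq_Re norm_power)
  then have "(cmod (ka u n))^2 * (beta n)^2 = (exp (- Lam n * Re u))^2 / (beta n)^2"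
    using bpos[of n] by (simp add: power2_eq_square)
  also have "(exp (- Lam n * Re u))^2 = exp (-2 * Lam n * Re u)"
    by (simp add: power2_eq_square flip: exp_add)
  finally show ?thesis .
qed

lemma ka_ok: "coeff_ok beta (ka u)"
  unfolding coeff_ok_def ka_sq by (rule kernel_summable)

lemma ka_in: "dirichlet_sum Lam (ka u) \<in> HE Lam beta"
  unfolding HE_def using ka_ok by auto

lemma ka_norm: "HE_norm Lam beta (dirichlet_sum Lam (ka u)) = sqrt (K (Re u))"
  unfolding HE_norm_def HE_coeffs_eq[OF ka_ok refl] ka_sq K_def ..

lemma ka_val: "dirichlet_sum Lam (ka u) u = of_real (K (Re u))"
proof -
  have t: "ka u n * exp (- (of_real (Lam n)) * u) = of_real (exp (-2 * Lam n * Re u) / (beta n)^2)" for n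
  proof -
    have "ka u n * exp (- (of_real (Lam n)) * u) = exp (- (of_real (Lam n)) * (cnj u + u)) / of_real ((beta n)^2)"
      unfolding ka_def by (simp add: algebra_simps flip: exp_add)
    also have "cnj u + u = of_real (2 * Re u)" using complex_add_cnj[of u] by (simp add: add.commute)
    also have "(- (of_real (Lam n)) * of_real (2 * Re u) :: complex) = of_real (-2 * Lam n * Re u)" by simp
    also have "exp (complex_of_real (-2 * Lam n * Re u)) = of_real (exp (-2 * Lam n * Re u))" by (rule exp_of_real)
    finally show ?thesis by (simp only: of_real_divide)
  qed
  show ?thesis unfolding dirichlet_sum_def t K_def
    by (rule suminf_of_real[OF kernel_summable, symmetric])
qed

lemma single_ok: "coeff_ok beta (\<lambda>n. if n = k then c else 0)"
proof -
  have "(\<lambda>n. (cmod (if n = k then c else 0))^2 * (beta n)^2) = (\<lambda>n. if n = k then (cmod c)^2 * (beta k)^2 else 0)"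
    by auto
  then show ?thesis unfolding coeff_ok_def using sums_single[of k "\<lambda>_. (cmod c)^2 * (beta k)^2"]
    by (simp add: sums_summable)
qed

lemma single_ds: "dirichlet_sum Lam (\<lambda>n. if n = k then c else 0) z = c * exp (- (of_real (Lam k)) * z)"
proof -
  have "(\<lambda>n. (if n = k then c else 0) * exp (- (of_real (Lam n)) * z)) = (\<lambda>n. if n = k then c * exp (- (of_real (Lam k)) * z) else 0)"
    by auto
  then show ?thesis unfolding dirichlet_sum_def
    using sums_single[of k "\<lambda>_. c * exp (- (of_real (Lam k)) * z)"] by (simp add: sums_iff)
qed

lemma single_norm:
  assumes "\<And>z. f z = c * exp (- (of_real (Lam k)) * z)"
  shows "f \<in> HE Lam beta" "HE_norm Lam beta f = cmod c * beta k"
proof -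
  have r: "\<And>z. f z = dirichlet_sum Lam (\<lambda>n. if n = k then c else 0) z" using assms single_ds by simp
  show "f \<in> HE Lam beta" unfolding HE_def using single_ok r by blast
  have "(\<lambda>n. (cmod (if n = k then c else 0))^2 * (beta n)^2) = (\<lambda>n. if n = k then (cmod c)^2 * (beta k)^2 else 0)"
    by auto
  then have "(\<Sum>n. (cmod (if n = k then c else 0))^2 * (beta n)^2) = (cmod c)^2 * (beta k)^2"
    using sums_single[of k "\<lambda>_. (cmod c)^2 * (beta k)^2"] by (simp add: sums_iff)
  then show "HE_norm Lam beta f = cmod c * beta k"
    unfolding HE_norm_def HE_coeffs_eq[OF single_ok r]
    using bpos[of k] by (simp add: real_sqrt_mult)
qed

end


theorem proposition4p4:
  fixes Lam beta :: "nat \<Rightarrow> real" and phi :: "complex \<Rightarrow> complex"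
  assumes Lam_nonneg: "0 \<le> Lam 0"
    and Lam_mono: "strict_mono Lam"
    and Lam_lim: "filterlim Lam at_top sequentially"
    and Lam_growth: "limsup (\<lambda>n. ereal (ln (real (Suc n)) / Lam n)) < \<infinity>"
    and Lam_pos: "Lam 0 > 0"
    and beta_pos: "\<And>n. beta n > 0"
    and condE: "liminf (\<lambda>n. ereal (ln (beta n) / Lam n)) = \<infinity>"
    and phi_entire: "phi holomorphic_on UNIV"
    and bdd: "bounded_comp_op Lam beta phi"
  shows "\<exists>b. Re b \<ge> 0 \<and> (\<forall>z. phi z = z + b)"
proof -
  have posn: "Lam n > 0" for n
    using Lam_pos Lam_mono by (metis le0 less_le_trans strict_mono_less_eq)
  interpret HEsetup Lam beta
    by unfold_locales (use posn Lam_mono Lam_growth beta_pos condE in auto)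
  have comp: "\<And>f. f \<in> HE Lam beta \<Longrightarrow> f \<circ> phi \<in> HE Lam beta" using bdd unfolding bounded_comp_op_def by blast
  obtain C where C: "\<And>f. f \<in> HE Lam beta \<Longrightarrow> HE_norm Lam beta (f \<circ> phi) \<le> C * HE_norm Lam beta f"
    using bdd unfolding bounded_comp_op_def by blast
  have Kineq: "K (Re (phi w)) \<le> C^2 * K (Re w)" for w
  proof -
    let ?u = "phi w"
    let ?f = "dirichlet_sum Lam (ka ?u)"
    have "K (Re ?u) = cmod (?f ?u)" using ka_val[of ?u] K_pos[of "Re ?u"] by simp
    also have "\<dots> = cmod ((?f \<circ> phi) w)" by simp
    also have "\<dots> \<le> HE_norm Lam beta (?f \<circ> phi) * sqrt (K (Re w))"
      using HE_point_bound[OF comp[OF ka_in]] unfolding K_def by blast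
    also have "\<dots> \<le> C * HE_norm Lam beta ?f * sqrt (K (Re w))"
      by (intro mult_right_mono C ka_in) (use K_pos[of "Re w"] in auto)
    also have "\<dots> = C * sqrt (K (Re ?u)) * sqrt (K (Re w))" by (simp add: ka_norm)
    finally have X0: "K (Re ?u) \<le> C * sqrt (K (Re ?u)) * sqrt (K (Re w))" .
    have e: "K (Re ?u) = sqrt (K (Re ?u)) * sqrt (K (Re ?u))" using K_pos[of "Re ?u"] by simp
    have X: "sqrt (K (Re ?u)) * sqrt (K (Re ?u)) \<le> (C * sqrt (K (Re w))) * sqrt (K (Re ?u))"
      using X0 e by (simp only: mult_ac)
    have sp: "sqrt (K (Re ?u)) > 0" using K_pos by simp
    have Y: "sqrt (K (Re ?u)) \<le> C * sqrt (K (Re w))" by (rule mult_right_le_imp_le[OF X sp])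
    have "(sqrt (K (Re ?u)))^2 \<le> (C * sqrt (K (Re w)))^2" by (rule power_mono[OF Y]) (use sp in simp)
    then show ?thesis using K_pos[of "Re ?u"] K_pos[of "Re w"] by (simp add: power_mult_distrib)
  qed
  define D where "D = ln (C^2 + 1) / (2 * Lam 0)"
  have D0: "D \<ge> 0" unfolding D_def using Lam_pos by simp
  have eD: "exp (2 * Lam 0 * D) = C^2 + 1" unfolding D_def using Lam_pos
    by (simp add: add_pos_nonneg add_nonneg_pos)
  have lower: "Re (phi w) \<ge> Re w - D" for w
  proof (rule ccontr)
    assume "\<not> Re (phi w) \<ge> Re w - D"
    then have "Re (phi w) \<le> Re w - D" by simp
    then have "K (Re w - D) \<le> K (Re (phi w))" by (rule K_anti)
    moreover have "(C^2 + 1) * K (Re w) \<le> K (Re w - D)" using K_shift[OF D0, of "Re w"] eD by simp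
    ultimately have "(C^2 + 1) * K (Re w) \<le> C^2 * K (Re w)" using Kineq[of w] by linarith
    then show False using K_pos[of "Re w"] by (simp add: algebra_simps)
  qed
  define g where "g w = 1 / (phi w - w + of_real (D + 1))" for w
  have den: "Re (phi w - w + of_real (D + 1)) \<ge> 1" for w using lower[of w] by simp
  have den0: "phi w - w + of_real (D + 1) \<noteq> 0" for w using den[of w] by (metis one_neq_zero zero_complex.simps(1) not_le zero_less_one)
  have "g holomorphic_on UNIV" unfolding g_def
    by (intro holomorphic_intros phi_entire[THEN holomorphic_on_subset]) (use den0 in auto)
  moreover have "bounded (range g)"
  proof -
    have "norm (g w) \<le> 1" for w
    proof -
      have "1 \<le> cmod (phi w - w + of_real (D + 1))" using den[of w] complex_Re_le_cmod order_trans by blast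
      then show ?thesis unfolding g_def by (simp add: norm_divide divide_le_eq_1)
    qed
    then show ?thesis unfolding bounded_iff by blast
  qed
  ultimately have "g constant_on UNIV" by (rule Liouville_theorem)
  then obtain c where c: "\<And>w. g w = c" unfolding constant_on_def by blast
  define b where "b = 1 / c - of_real (D + 1)"
  have phib: "phi z = z + b" for z
  proof -
    have "phi z - z + of_real (D + 1) = 1 / g z" unfolding g_def by simp
    then have "1 / c = phi z - z + of_real (D + 1)" using c[of z] by simp
    then show ?thesis unfolding b_def by (simp add: algebra_simps)
  qed
  have Cb: "exp (- Lam k * Re b) \<le> C" for k
  proof -
    define f :: "complex \<Rightarrow> complex" where "f z = 1 * exp (- (of_real (Lam k)) * z)" for z
    have fin: "f \<in> HE Lam beta" and fn: "HE_norm Lam beta f = cmod 1 * beta k"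
      using single_norm[of f 1 k] unfolding f_def by auto
    have "(f \<circ> phi) z = exp (- (of_real (Lam k)) * b) * exp (- (of_real (Lam k)) * z)" for z
      unfolding f_def o_def phib by (simp add: algebra_simps flip: exp_add)
    then have gn: "HE_norm Lam beta (f \<circ> phi) = cmod (exp (- (of_real (Lam k)) * b)) * beta k"
      using single_norm(2) by blast
    have "cmod (exp (- (of_real (Lam k)) * b)) * beta k \<le> C * beta k"
      using C[OF fin] gn fn by simp
    then have "cmod (exp (- (of_real (Lam k)) * b)) \<le> C" using beta_pos[of k] by simp
    then show ?thesis by (simp add: norm_exp_eq_Re)
  qed
  have "Re b \<ge> 0"
  proof (rule ccontr)
    assume neg: "\<not> Re b \<ge> 0"
    define M where "M = ln (max C 1) / (- Re b) + 1"
    obtain k where k: "Lam k \<ge> M"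
      using Lam_lim unfolding filterlim_at_top eventually_sequentially by blast
    have "ln (max C 1) < Lam k * (- Re b)"
      using k neg unfolding M_def by (simp add: field_simps)
    then have "ln (max C 1) < - Lam k * Re b" by simp
    then have "exp (ln (max C 1)) < exp (- Lam k * Re b)" by (rule exp_less_mono)
    moreover have "exp (ln (max C 1)) = max C 1" by (rule exp_ln) simp
    ultimately have "max C 1 < exp (- Lam k * Re b)" by simp
    then show False using Cb[of k] by simp
  qed
  then show ?thesis using phib by blast
qed

end
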